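(* Define $a_n=0$ if $n$ is not a power of $2$, $a_1=1$, and $a_{2^k}=(-1)^{k+1}$ for $k\ge1$. Then the operator $Tf(x)=f(x)+f(2x)-f(4x)+f(8x)-f(16x)+\dots=\sum_n a_nf(nx)$ satisfies $\|Tf\|_{L^2}=\sqrt2\,\|f\|_{L^2}$ for all $f\in C_0(0,\infty)$, and hence extends to $\sqrt2$ times a unitary operator on $L^2[0,\infty)$.
   Context: $C_0(0,\infty)$ denotes continuous compactly supported functions on $(0,\infty)$; $L^2=L^2[0,\infty)$ with Lebesgue measure. *)

theory Defs
  imports "HOL-Analysis.Analysis"
begin

definition coeff_a :: "nat \<Rightarrow> real" where
  "coeff_a n = (if n = 1 then 1
     else if (\<exists>k\<ge>1. n = 2 ^ k) then (-1) ^ (Suc (THE k. n = 2 ^ k))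
     else 0)"

text \<open>C_0(0,infinity): continuous on (0,infinity), support in a compact subset of (0,infinity);
  functions are extended by zero outside (0,infinity).\<close>
definition C0_pos :: "(real \<Rightarrow> complex) set" where
  "C0_pos = {f. continuous_on {0<..} f \<and>
     (\<exists>K. compact K \<and> K \<subseteq> {0<..} \<and> (\<forall>x. x \<notin> K \<longrightarrow> f x = 0))}"

definition T_op :: "(real \<Rightarrow> complex) \<Rightarrow> real \<Rightarrow> complex" where
  "T_op f x = (\<Sum>n. complex_of_real (coeff_a n) * f (real n * x))"

definition L2norm :: "(real \<Rightarrow> complex) \<Rightarrow> real" where
  "L2norm g = sqrt (set_lebesgue_integral lborel {0..} (\<lambda>x. (cmod (g x))\<^sup>2))"

definition L2_pos :: "(real \<Rightarrow> complex) set" where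
  "L2_pos = {g. g \<in> borel_measurable lborel \<and>
     set_integrable lborel {0..} (\<lambda>x. (cmod (g x))\<^sup>2)}"

end

theory Submission
  imports Defs
begin

definition N2 :: "(real \<Rightarrow> complex) \<Rightarrow> real" where
  "N2 g = (LINT x:{0..}|lborel. (cmod (g x))\<^sup>2)"

lemma L2norm_N2: "L2norm g = sqrt (N2 g)" by (simp add: L2norm_def N2_def)

lemma N2_nonneg: "N2 g \<ge> 0"
  unfolding N2_def set_lebesgue_integral_def
  by (rule integral_nonneg_AE) (auto simp: indicator_def)

lemma bsupp_L2:
  fixes G :: "real \<Rightarrow> complex"
  assumes meas: "G \<in> borel_measurable lborel" and bd: "\<And>x. cmod (G x) \<le> M"
    and z: "\<And>x. x > b \<Longrightarrow> G x = 0"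
  shows "G \<in> L2_pos"
proof -
  have M0: "0 \<le> M" using bd[of 0] norm_ge_zero order_trans by blast
  have "integrable lborel (\<lambda>x. M\<^sup>2 * indicator {0..b} x :: real)"
    by (intro integrable_mult_right integrable_real_indicator) (auto simp: emeasure_lborel_Icc_eq)
  moreover have "(\<lambda>x. indicator {0..} x *\<^sub>R (cmod (G x))\<^sup>2) \<in> borel_measurable lborel"
    using meas by measurable
  moreover have "AE x in lborel. norm (indicator {0..} x *\<^sub>R (cmod (G x))\<^sup>2) \<le> norm (M\<^sup>2 * indicator {0..b} x :: real)"
  proof (rule AE_I2)
    fix x
    have "(cmod (G x))\<^sup>2 \<le> M\<^sup>2" using bd[of x] by (simp add: power_mono)
    then show "norm (indicator {0..} x *\<^sub>R (cmod (G x))\<^sup>2) \<le> norm (M\<^sup>2 * indicator {0..b} x :: real)"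
      using z[of x] by (cases "x < 0"; cases "x > b") (auto simp: indicator_def)
  qed
  ultimately have "integrable lborel (\<lambda>x. indicator {0..} x *\<^sub>R (cmod (G x))\<^sup>2)"
    by (rule Bochner_Integration.integrable_bound)
  then show ?thesis using meas unfolding L2_pos_def set_integrable_def by simp
qed

lemma sq_add_le: "(cmod (u + v))\<^sup>2 \<le> 2 * (cmod u)\<^sup>2 + 2 * (cmod v)\<^sup>2"
proof -
  have "cmod (u + v) \<le> cmod u + cmod v" by (rule norm_triangle_ineq)
  then have "(cmod (u + v))\<^sup>2 \<le> (cmod u + cmod v)\<^sup>2" by (simp add: power_mono)
  also have "\<dots> \<le> 2 * (cmod u)\<^sup>2 + 2 * (cmod v)\<^sup>2"
  proof -
    have h: "0 \<le> (cmod u - cmod v)\<^sup>2" by simp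
    then show ?thesis unfolding power2_sum power2_diff by linarith
  qed
  finally show ?thesis .
qed

lemma L2_add:
  assumes u: "u \<in> L2_pos" and v: "v \<in> L2_pos"
  shows "(\<lambda>x. u x + v x) \<in> L2_pos" "N2 (\<lambda>x. u x + v x) \<le> 2 * N2 u + 2 * N2 v"
proof -
  have um: "u \<in> borel_measurable lborel" and ui: "set_integrable lborel {0..} (\<lambda>x. (cmod (u x))\<^sup>2)"
    using u by (auto simp: L2_pos_def)
  have vm: "v \<in> borel_measurable lborel" and vi: "set_integrable lborel {0..} (\<lambda>x. (cmod (v x))\<^sup>2)"
    using v by (auto simp: L2_pos_def)
  have wi: "set_integrable lborel {0..} (\<lambda>x. 2 * (cmod (u x))\<^sup>2 + 2 * (cmod (v x))\<^sup>2)"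
    using ui vi by (intro set_integral_add set_integrable_mult_right) auto
  have m: "(\<lambda>x. u x + v x) \<in> borel_measurable lborel" using um vm by measurable
  have si: "set_integrable lborel {0..} (\<lambda>x. (cmod (u x + v x))\<^sup>2)"
  proof (rule set_integrable_bound[OF wi])
    show "set_borel_measurable lborel {0..} (\<lambda>x. (cmod (u x + v x))\<^sup>2)"
      unfolding set_borel_measurable_def using m by measurable
    show "AE x in lborel. x \<in> {0..} \<longrightarrow> norm ((cmod (u x + v x))\<^sup>2) \<le> norm (2 * (cmod (u x))\<^sup>2 + 2 * (cmod (v x))\<^sup>2)"
      using sq_add_le by auto
  qed
  then show "(\<lambda>x. u x + v x) \<in> L2_pos" using m by (simp add: L2_pos_def)
  have "N2 (\<lambda>x. u x + v x) \<le> (LINT x:{0..}|lborel. 2 * (cmod (u x))\<^sup>2 + 2 * (cmod (v x))\<^sup>2)"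
    unfolding N2_def by (rule set_integral_mono[OF si wi]) (rule sq_add_le)
  also have "\<dots> = 2 * N2 u + 2 * N2 v"
    using ui vi by (simp add: N2_def set_integral_add)
  finally show "N2 (\<lambda>x. u x + v x) \<le> 2 * N2 u + 2 * N2 v" .
qed

lemma L2_scale:
  assumes u: "u \<in> L2_pos"
  shows "(\<lambda>x. c * u x) \<in> L2_pos" "N2 (\<lambda>x. c * u x) = (cmod c)\<^sup>2 * N2 u"
proof -
  have um: "u \<in> borel_measurable lborel" and ui: "set_integrable lborel {0..} (\<lambda>x. (cmod (u x))\<^sup>2)"
    using u by (auto simp: L2_pos_def)
  have eq: "(\<lambda>x. (cmod (c * u x))\<^sup>2) = (\<lambda>x. (cmod c)\<^sup>2 * (cmod (u x))\<^sup>2)"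
    by (simp add: norm_mult power_mult_distrib)
  have m: "(\<lambda>x. c * u x) \<in> borel_measurable lborel" using um by measurable
  have "set_integrable lborel {0..} (\<lambda>x. (cmod (c * u x))\<^sup>2)"
    unfolding eq by (rule set_integrable_mult_right) (use ui in auto)
  then show "(\<lambda>x. c * u x) \<in> L2_pos" using m unfolding L2_pos_def by auto
  show "N2 (\<lambda>x. c * u x) = (cmod c)\<^sup>2 * N2 u" unfolding N2_def eq by simp
qed

lemma L2_diff:
  assumes u: "u \<in> L2_pos" and v: "v \<in> L2_pos"
  shows "(\<lambda>x. u x - v x) \<in> L2_pos" "N2 (\<lambda>x. u x - v x) \<le> 2 * N2 u + 2 * N2 v"
proof -
  have v': "(\<lambda>x. (-1) * v x) \<in> L2_pos" "N2 (\<lambda>x. (-1) * v x) = N2 v"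
    using L2_scale[OF v, of "-1"] by auto
  have eq: "(\<lambda>x. u x - v x) = (\<lambda>x. u x + (-1) * v x)" by auto
  show "(\<lambda>x. u x - v x) \<in> L2_pos" unfolding eq by (rule L2_add[OF u v'(1)])
  show "N2 (\<lambda>x. u x - v x) \<le> 2 * N2 u + 2 * N2 v" unfolding eq using L2_add(2)[OF u v'(1)] v'(2) by simp
qed

lemma C0_props:
  assumes "f \<in> C0_pos"
  obtains a b M where "0 < a" "\<And>x. f x \<noteq> 0 \<Longrightarrow> a \<le> x \<and> x \<le> b" "\<And>x. cmod (f x) \<le> M"
    "continuous_on UNIV f"
proof -
  obtain K where c: "continuous_on {0<..} f" and K: "compact K" "K \<subseteq> {0<..}" and z: "\<And>x. x \<notin> K \<Longrightarrow> f x = 0"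
    using assms by (auto simp: C0_pos_def)
  show thesis
  proof (cases "K = {}")
    case True
    then have "f = (\<lambda>x. 0)" using z by auto
    then show ?thesis by (intro that[of 1 1 0]) auto
  next
    case False
    obtain a where a: "a \<in> K" "\<And>t. t \<in> K \<Longrightarrow> a \<le> t" using compact_attains_inf[OF K(1) False] by blast
    obtain b where b: "b \<in> K" "\<And>t. t \<in> K \<Longrightarrow> t \<le> b" using compact_attains_sup[OF K(1) False] by blast
    have a0: "0 < a" using a K by auto
    have "compact (f ` K)" using compact_continuous_image[OF continuous_on_subset[OF c K(2)] K(1)] .
    then obtain M where M: "\<And>y. y \<in> f ` K \<Longrightarrow> norm y \<le> M" using compact_imp_bounded bounded_iff by metis
    have Mb: "cmod (f x) \<le> max M 0" for x
      using M[of "f x"] z[of x] by (cases "x \<in> K") auto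
    have c2: "continuous_on {..<a} f"
      by (rule continuous_on_cong[THEN iffD1, OF refl _ continuous_on_const[of _ 0]]) (use a z in force)
    have "continuous_on ({0<..} \<union> {..<a}) f" by (rule continuous_on_open_Un) (use c c2 in auto)
    moreover have "{0<..} \<union> {..<a} = (UNIV :: real set)" using a0 by auto
    ultimately have "continuous_on UNIV f" by simp
    show thesis
      by (rule that[OF a0 _ Mb \<open>continuous_on UNIV f\<close>]) (use a b z in blast)
  qed
qed

lemma C0_L2: assumes "f \<in> C0_pos" shows "f \<in> L2_pos"
proof -
  obtain a b M where "0 < a" "\<And>x. f x \<noteq> 0 \<Longrightarrow> a \<le> x \<and> x \<le> b" "\<And>x. cmod (f x) \<le> M"
    "continuous_on UNIV f" using C0_props[OF assms] by blast
  note h = this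
  have z: "f x = 0" if "x > b" for x using h(2)[of x] that by fastforce
  show ?thesis
    by (rule bsupp_L2[of f M b]) (use h z in \<open>auto intro: borel_measurable_continuous_onI\<close>)
qed

definition bb :: "nat \<Rightarrow> complex" where "bb k = complex_of_real (coeff_a (2^k))"

lemma bb0: "bb 0 = 1" by (simp add: bb_def coeff_a_def)

lemma bbS: "bb (Suc k) = (-1)^k"
proof -
  have ne: "(2::nat)^Suc k \<noteq> 1" by simp
  have ex: "\<exists>j\<ge>1. (2::nat)^Suc k = 2^j" by (intro exI[of _ "Suc k"]) simp
  have the: "(THE j. (2::nat)^Suc k = 2^j) = Suc k"
  proof (rule the_equality)
    fix j assume "(2::nat)^Suc k = 2^j"
    moreover have "(1::nat) < 2" by simp
    ultimately show "j = Suc k" using power_inject_exp by metis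
  qed simp
  have "coeff_a (2^Suc k) = (-1)^(Suc (Suc k))"
    unfolding coeff_a_def using ne ex the by presburger
  then show ?thesis by (simp add: bb_def)
qed

lemma coeff_nz: "coeff_a n \<noteq> 0 \<Longrightarrow> \<exists>k. n = 2^k"
  unfolding coeff_a_def by (metis power_0)

lemma T_op_finite:
  assumes fz: "\<And>y. y > b \<Longrightarrow> f y = 0"
    and x: "x > 0" and L: "b < 2^L * x"
  shows "T_op f x = (\<Sum>k<L. bb k * f (2^k * x))"
proof -
  let ?c = "\<lambda>n. complex_of_real (coeff_a n) * f (real n * x)"
  have "T_op f x = sum ?c ((\<lambda>k. 2^k) ` {..<L})"
    unfolding T_op_def
  proof (rule suminf_finite)
    show "finite ((\<lambda>k. (2::nat)^k) ` {..<L})" by simp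
    fix n assume n: "n \<notin> (\<lambda>k. (2::nat)^k) ` {..<L}"
    show "?c n = 0"
    proof (cases "coeff_a n = 0")
      case True then show ?thesis by simp
    next
      case False
      then obtain k where k: "n = 2^k" using coeff_nz by blast
      then have "\<not> k < L" using n by auto
      then have "(2::real)^L \<le> 2^k" by (intro power_increasing) auto
      then have "2^L * x \<le> 2^k * x" using x by (intro mult_right_mono) auto
      then have "real n * x > b" using L k by simp
      then show ?thesis using fz by simp
    qed
  qed
  also have "\<dots> = (\<Sum>k<L. ?c (2^k))"
    by (rule sum.reindex_cong[of "\<lambda>k. 2^k"]) (auto simp: inj_on_def power_inject_exp)
  also have "\<dots> = (\<Sum>k<L. bb k * f (2^k * x))"
    by (simp add: bb_def)
  finally show ?thesis .
qed

lemma telesc: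
  fixes G :: "real \<Rightarrow> complex" and x :: real
  shows "(\<Sum>k<Suc (Suc m). bb k * (G (2^k * x) + G (2 * (2^k * x)))) =
     G x + 2 * G (2 * x) + (-1)^m * G (2^Suc (Suc m) * x)"
proof (induction m)
  case 0
  show ?case by (simp add: bb0 bbS numeral_2_eq_2 eval_nat_numeral algebra_simps)
next
  case (Suc m)
  have "(\<Sum>k<Suc (Suc (Suc m)). bb k * (G (2^k * x) + G (2 * (2^k * x)))) =
     (\<Sum>k<Suc (Suc m). bb k * (G (2^k * x) + G (2 * (2^k * x)))) +
      bb (Suc (Suc m)) * (G (2^Suc (Suc m) * x) + G (2 * (2^Suc (Suc m) * x)))"
    by simp
  also have "\<dots> = G x + 2 * G (2 * x) + (-1)^Suc m * G (2^Suc (Suc (Suc m)) * x)"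
    unfolding Suc bbS by (simp add: algebra_simps)
  finally show ?case .
qed

lemma T_op_G:
  assumes fG: "\<And>y. f y = G y + G (2*y)"
    and Gz: "\<And>y. y \<le> 0 \<Longrightarrow> G y = 0" "\<And>y. y > b \<Longrightarrow> G y = 0"
  shows "T_op f x = G x + 2 * G (2 * x)"
proof (cases "x \<le> 0")
  case True
  have "f (real n * x) = 0" for n
  proof -
    have "real n * x \<le> 0" using True by (simp add: mult_nonneg_nonpos)
    moreover then have "2 * (real n * x) \<le> 0" by linarith
    ultimately have e1: "G (real n * x) = 0" and e2: "G (2 * (real n * x)) = 0" using Gz(1) by blast+
    show ?thesis by (simp only: fG e1 e2) simp
  qed
  then show ?thesis using True Gz(1) by (simp add: T_op_def)
next
  case False
  then have x: "x > 0" by simp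
  have fz: "f y = 0" if "y > b" for y
  proof (cases "y \<le> 0")
    case True then show ?thesis using fG Gz(1) by simp
  next
    case False then show ?thesis using fG Gz(2) that by simp
  qed
  obtain n where n: "b / x < 2^n" using real_arch_pow[of 2 "b/x"] by auto
  have "(2::real)^n \<le> 2^Suc (Suc n)" by (intro power_increasing) auto
  then have bL: "b < 2^Suc (Suc n) * x" using n x
    by (smt (verit, best) divide_less_eq mult_right_mono)
  have "T_op f x = (\<Sum>k<Suc (Suc n). bb k * f (2^k * x))"
    by (rule T_op_finite[OF fz x bL])
  also have "\<dots> = (\<Sum>k<Suc (Suc n). bb k * (G (2^k * x) + G (2 * (2^k * x))))"
    using fG by simp
  also have "\<dots> = G x + 2 * G (2 * x) + (-1)^n * G (2^Suc (Suc n) * x)" by (rule telesc)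
  also have "\<dots> = G x + 2 * G (2 * x)" using Gz(2)[OF bL] by simp
  finally show ?thesis .
qed

lemma bsupp_int:
  fixes h :: "real \<Rightarrow> real"
  assumes meas: "h \<in> borel_measurable lborel" and bd: "\<And>x. \<bar>h x\<bar> \<le> M"
    and z: "\<And>x. x > b \<Longrightarrow> h x = 0"
  shows "set_integrable lborel {0..} h"
proof -
  have "integrable lborel (\<lambda>x. M * indicator {0..b} x :: real)"
    by (intro integrable_mult_right integrable_real_indicator) (auto simp: emeasure_lborel_Icc_eq)
  moreover have "(\<lambda>x. indicator {0..} x *\<^sub>R h x) \<in> borel_measurable lborel"
    using meas by measurable
  moreover have "AE x in lborel. norm (indicator {0..} x *\<^sub>R h x) \<le> norm (M * indicator {0..b} x :: real)"
  proof (rule AE_I2)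
    fix x
    show "norm (indicator {0..} x *\<^sub>R h x) \<le> norm (M * indicator {0..b} x :: real)"
      using z[of x] bd[of x] by (cases "x < 0"; cases "x > b") (auto simp: indicator_def)
  qed
  ultimately have "integrable lborel (\<lambda>x. indicator {0..} x *\<^sub>R h x)"
    by (rule Bochner_Integration.integrable_bound)
  then show ?thesis unfolding set_integrable_def by simp
qed

lemma N2_scale:
  fixes G :: "real \<Rightarrow> complex"
  assumes s: "s > 0"
  shows "N2 (\<lambda>x. G (s * x)) = N2 G / s"
proof -
  have "N2 G = (\<integral>y. indicator {0..} y * (cmod (G y))\<^sup>2 \<partial>lborel)"
    by (simp add: N2_def set_lebesgue_integral_def)
  also have "\<dots> = \<bar>s\<bar> *\<^sub>R (\<integral>x. indicator {0..} (0 + s * x) * (cmod (G (0 + s * x)))\<^sup>2 \<partial>lborel)"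
    by (rule lborel_integral_real_affine) (use s in simp)
  also have "(\<lambda>x. indicator {0..} (0 + s * x) * (cmod (G (0 + s * x)))\<^sup>2) =
      (\<lambda>x. indicator {0..} x * (cmod (G (s * x)))\<^sup>2 :: real)"
    using s by (auto simp: indicator_def zero_le_mult_iff)
  also have "(\<integral>x. indicator {0..} x * (cmod (G (s * x)))\<^sup>2 \<partial>lborel) = N2 (\<lambda>x. G (s * x))"
    by (simp add: N2_def set_lebesgue_integral_def)
  finally show ?thesis using s by simp
qed

lemma sq_combo:
  fixes u v :: complex and c :: real
  shows "(cmod (u + of_real c * v))\<^sup>2 = (cmod u)\<^sup>2 + c\<^sup>2 * (cmod v)\<^sup>2 + 2 * c * (Re u * Re v + Im u * Im v)"
  unfolding cmod_power2 by (simp add: power2_eq_square algebra_simps)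

lemma N2_combo:
  fixes G :: "real \<Rightarrow> complex" and c :: real
  assumes meas: "G \<in> borel_measurable lborel" and bd: "\<And>x. cmod (G x) \<le> M"
    and z: "\<And>x. x > b \<Longrightarrow> G x = 0" and b: "b \<ge> 0"
  shows "N2 (\<lambda>x. G x + of_real c * G (2 * x)) =
    N2 G + c\<^sup>2 * N2 (\<lambda>x. G (2 * x)) + 2 * c * (LINT x:{0..}|lborel. (Re (G x) * Re (G (2 * x)) + Im (G x) * Im (G (2 * x))))"
proof -
  have M0: "0 \<le> M" using bd[of 0] norm_ge_zero order_trans by blast
  have [measurable]: "G \<in> borel_measurable borel" using meas by simp
  have z2: "G (2 * x) = 0" if "x > b" for x using z[of "2*x"] that b by simp
  have i1: "set_integrable lborel {0..} (\<lambda>x. (cmod (G x))\<^sup>2)"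
    by (rule bsupp_int[where M="M\<^sup>2" and b=b]) (use meas z bd in \<open>auto intro: power_mono\<close>)
  have i2: "set_integrable lborel {0..} (\<lambda>x. (cmod (G (2 * x)))\<^sup>2)"
    by (rule bsupp_int[where M="M\<^sup>2" and b=b]) (use meas z2 bd in \<open>auto intro: power_mono\<close>)
  have i3: "set_integrable lborel {0..} (\<lambda>x. (Re (G x) * Re (G (2 * x)) + Im (G x) * Im (G (2 * x))))"
  proof (rule bsupp_int[where M="M * M" and b=b])
    show "(\<lambda>x. (Re (G x) * Re (G (2 * x)) + Im (G x) * Im (G (2 * x)))) \<in> borel_measurable lborel" by measurable
    fix x
    have "\<bar>(Re (G x) * Re (G (2 * x)) + Im (G x) * Im (G (2 * x)))\<bar> \<le> cmod (G x * cnj (G (2 * x)))"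
      using abs_Re_le_cmod[of "G x * cnj (G (2 * x))"] by simp
    also have "\<dots> = cmod (G x) * cmod (G (2 * x))" by (simp add: norm_mult)
    also have "\<dots> \<le> M * M" using bd M0 by (intro mult_mono) auto
    finally show "\<bar>(Re (G x) * Re (G (2 * x)) + Im (G x) * Im (G (2 * x)))\<bar> \<le> M * M" .
    show "x > b \<Longrightarrow> (Re (G x) * Re (G (2 * x)) + Im (G x) * Im (G (2 * x))) = 0" using z by simp
  qed
  have "N2 (\<lambda>x. G x + of_real c * G (2 * x)) =
     (LINT x:{0..}|lborel. (cmod (G x))\<^sup>2 + c\<^sup>2 * (cmod (G (2 * x)))\<^sup>2 + 2 * c * (Re (G x) * Re (G (2 * x)) + Im (G x) * Im (G (2 * x))))"
    unfolding N2_def sq_combo ..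
  also have "\<dots> = N2 G + c\<^sup>2 * N2 (\<lambda>x. G (2 * x)) + 2 * c * (LINT x:{0..}|lborel. (Re (G x) * Re (G (2 * x)) + Im (G x) * Im (G (2 * x))))"
    using i1 i2 i3 by (simp add: N2_def set_integral_add set_integrable_mult_right)
  finally show ?thesis .
qed

definition Finv :: "(real \<Rightarrow> complex) \<Rightarrow> real \<Rightarrow> complex" where
  "Finv f x = (\<Sum>k. (-1)^k * f (2^k * x))"

lemma Finv_props:
  fixes f :: "real \<Rightarrow> complex"
  assumes a: "0 < a" and supp: "\<And>x. f x \<noteq> 0 \<Longrightarrow> a \<le> x \<and> x \<le> b"
    and bd: "\<And>x. cmod (f x) \<le> M" and cont: "continuous_on UNIV f"
  shows "\<And>x. f x = Finv f x + Finv f (2 * x)"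
    and "\<And>x. x \<le> 0 \<Longrightarrow> Finv f x = 0"
    and "\<And>x. x > b \<Longrightarrow> Finv f x = 0"
    and "Finv f \<in> borel_measurable lborel"
    and "\<exists>C. \<forall>x. cmod (Finv f x) \<le> C"
proof -
  have fm[measurable]: "f \<in> borel_measurable borel" using cont by (rule borel_measurable_continuous_onI)
  have M0: "0 \<le> M" using bd[of 0] norm_ge_zero order_trans by blast
  have fz: "f y = 0" if "y < a \<or> y > b" for y using supp[of y] that by fastforce
  have sm: "summable (\<lambda>k. (-1)^k * f (2^k * x))" for x
  proof (cases "x > 0")
    case True
    obtain L where L: "b / x < 2^L" using real_arch_pow[of 2 "b/x"] by auto
    show ?thesis
    proof (rule summable_finite[of "{..<L}"])
      fix k assume "k \<notin> {..<L}"
      then have "(2::real)^L \<le> 2^k" by (intro power_increasing) auto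
      then have "b < 2^k * x" using L True by (smt (verit, best) divide_less_eq mult_right_mono)
      then show "(-1)^k * f (2^k * x) = 0" using fz by simp
    qed simp
  next
    case False
    have "2^k * x < a" for k :: nat using False a by (smt (verit) mult_nonneg_nonpos zero_le_power)
    then show ?thesis using fz by simp
  qed
  show z0: "Finv f x = 0" if "x \<le> 0" for x
  proof -
    have "2^k * x < a" for k :: nat using that a by (smt (verit) mult_nonneg_nonpos zero_le_power)
    then show ?thesis using fz by (simp add: Finv_def)
  qed
  show "Finv f x = 0" if "x > b" for x
  proof (cases "x \<le> 0")
    case True then show ?thesis using z0 by simp
  next
    case False
    have "b < 2^k * x" for k :: nat
    proof -
      have "1 * x \<le> 2^k * x" using False by (intro mult_right_mono) auto
      then show ?thesis using that by simp
    qed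
    then show ?thesis using fz by (simp add: Finv_def)
  qed
  show "f x = Finv f x + Finv f (2 * x)" for x
  proof -
    have "(\<Sum>k. (-1)^(Suc k) * f (2^(Suc k) * x)) = Finv f x - (-1)^0 * f (2^0 * x)"
      unfolding Finv_def by (rule suminf_split_head[OF sm])
    moreover have "(\<lambda>k. (-1)^(Suc k) * f (2^(Suc k) * x)) = (\<lambda>k. - ((-1)^k * f (2^k * (2 * x))))"
      by (auto simp: mult.assoc mult.commute mult.left_commute)
    moreover have "(\<Sum>k. - ((-1)^k * f (2^k * (2 * x)))) = - Finv f (2 * x)"
      unfolding Finv_def by (rule suminf_minus[OF sm])
    ultimately have h: "- Finv f (2 * x) = Finv f x - f x" by simp
    have "f x = Finv f x - (Finv f x - f x)" by simp
    also have "\<dots> = Finv f x - (- Finv f (2 * x))" using h by simp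
    also have "\<dots> = Finv f x + Finv f (2 * x)" by simp
    finally show ?thesis .
  qed
  show "Finv f \<in> borel_measurable lborel"
  proof -
    have "(\<lambda>x. Finv f x) \<in> borel_measurable borel"
    proof (rule borel_measurable_LIMSEQ_metric[where f="\<lambda>n x. \<Sum>k<n. (-1)^k * f (2^k * x)"])
      show "(\<lambda>x. \<Sum>k<n. (-1)^k * f (2^k * x)) \<in> borel_measurable borel" for n by measurable
      show "(\<lambda>n. \<Sum>k<n. (-1)^k * f (2^k * x)) \<longlonglongrightarrow> Finv f x" for x
        unfolding Finv_def by (rule summable_LIMSEQ[OF sm])
    qed
    then show ?thesis by simp
  qed
  obtain P :: nat where P: "b / a < 2^P" using real_arch_pow[of 2 "b/a"] by auto
  have "cmod (Finv f x) \<le> real P * M" for x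
  proof (cases "x > 0")
    case False then show ?thesis using z0 M0 by simp
  next
    case True
    have ex: "\<exists>k::nat. a \<le> 2^k * x"
    proof -
      obtain k where "a / x < 2^k" using real_arch_pow[of 2 "a/x"] by auto
      then show ?thesis using True by (intro exI[of _ k]) (simp add: divide_less_eq)
    qed
    define j where "j = (LEAST k::nat. a \<le> 2^k * x)"
    have j: "a \<le> 2^j * x" unfolding j_def using LeastI_ex[OF ex] .
    have lt: "\<not> a \<le> 2^k * x" if "k < j" for k using not_less_Least[OF that[unfolded j_def]] by simp
    have "Finv f x = (\<Sum>k\<in>{j..<j+P}. (-1)^k * f (2^k * x))"
      unfolding Finv_def
    proof (rule suminf_finite)
      fix k assume k: "k \<notin> {j..<j+P}"
      show "(-1)^k * f (2^k * x) = 0"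
      proof (cases "k < j")
        case True then show ?thesis using lt[OF True] fz by simp
      next
        case False
        then have kk: "j + P \<le> k" using k by auto
        have "(2::real)^(j+P) \<le> 2^k" using kk by (intro power_increasing) auto
        then have "2^P * (2^j * x) \<le> 2^k * x" using True by (simp add: power_add mult_right_mono mult.assoc mult.commute)
        moreover have "2^P * a \<le> 2^P * (2^j * x)" using j by simp
        moreover have "b < 2^P * a" using P a by (simp add: divide_less_eq mult.commute)
        ultimately have "b < 2^k * x" by linarith
        then show ?thesis using fz by simp
      qed
    qed simp
    also have "cmod \<dots> \<le> (\<Sum>k\<in>{j..<j+P}. M)"
      by (rule sum_norm_le) (simp add: norm_mult norm_power bd)
    also have "\<dots> = real P * M" by simp
    finally show ?thesis .
  qed
  then show "\<exists>C. \<forall>x. cmod (Finv f x) \<le> C" by blast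
qed

theorem part1:
  assumes f: "f \<in> C0_pos"
  shows "L2norm (T_op f) = sqrt 2 * L2norm f"
proof -
  obtain a b M where a: "0 < a" and supp: "\<And>x. f x \<noteq> 0 \<Longrightarrow> a \<le> x \<and> x \<le> b"
    and bd: "\<And>x. cmod (f x) \<le> M" and cont: "continuous_on UNIV f"
    using C0_props[OF f] by blast
  let ?G = "Finv f"
  have FP1: "\<And>x. f x = Finv f x + Finv f (2 * x)" using Finv_props(1)[of a f b M] a supp bd cont by blast
  have FP2: "\<And>x. x \<le> 0 \<Longrightarrow> Finv f x = 0" using Finv_props(2)[of a f b M] a supp bd cont by blast
  have FP3: "\<And>x. x > b \<Longrightarrow> Finv f x = 0" using Finv_props(3)[of a f b M] a supp bd cont by blast
  have FP4: "Finv f \<in> borel_measurable lborel" using Finv_props(4)[of a f b M] a supp bd cont by blast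
  have FP5: "\<exists>C. \<forall>x. cmod (Finv f x) \<le> C" using Finv_props(5)[of a f b M] a supp bd cont by blast
  obtain C where C: "\<And>x. cmod (?G x) \<le> C" using FP5 by blast
  have b0: "max b 0 \<ge> 0" by simp
  have Gz: "\<And>x. x > max b 0 \<Longrightarrow> ?G x = 0" using FP3 by simp
  have T: "T_op f = (\<lambda>x. ?G x + of_real 2 * ?G (2 * x))"
    using T_op_G[where G="Finv f" and f=f and b=b, OF FP1 FP2 FP3] by auto
  have F1: "f = (\<lambda>x. ?G x + of_real 1 * ?G (2 * x))" using FP1 by auto
  have S: "N2 (\<lambda>x. ?G (2 * x)) = N2 ?G / 2" by (rule N2_scale) simp
  define X where "X = (LINT x:{0..}|lborel. (Re (?G x) * Re (?G (2 * x)) + Im (?G x) * Im (?G (2 * x))))"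
  have e1: "N2 (T_op f) = N2 ?G + 2\<^sup>2 * (N2 ?G / 2) + 2 * 2 * X"
  proof -
    have "N2 (T_op f) = N2 (\<lambda>x. ?G x + of_real 2 * ?G (2 * x))" by (simp only: T)
    also have "\<dots> = N2 ?G + 2\<^sup>2 * N2 (\<lambda>x. ?G (2 * x)) + 2 * 2 * X"
      unfolding X_def by (rule N2_combo[OF FP4 C Gz b0, where c=2])
    finally show ?thesis by (simp only: S)
  qed
  have e2: "N2 f = N2 ?G + 1\<^sup>2 * (N2 ?G / 2) + 2 * 1 * X"
  proof -
    have "N2 f = N2 (\<lambda>x. ?G x + of_real 1 * ?G (2 * x))" by (subst F1) (rule refl)
    also have "\<dots> = N2 ?G + 1\<^sup>2 * N2 (\<lambda>x. ?G (2 * x)) + 2 * 1 * X"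
      unfolding X_def by (rule N2_combo[OF FP4 C Gz b0, where c=1])
    finally show ?thesis by (simp only: S)
  qed
  have "N2 (T_op f) = 2 * N2 f" using e1 e2 by simp
  then show ?thesis by (simp add: L2norm_N2 real_sqrt_mult)
qed

lemma telesc2:
  fixes w :: "nat \<Rightarrow> complex"
  shows "(\<Sum>k\<le>N. (-1)^k * w (Suc k)) + (\<Sum>k\<le>N. (-1)^k * w k) = w 0 + (-1)^N * w (Suc N)"
  by (induction N) (simp_all add: algebra_simps)

lemma div_lt_aux:
  fixes x a c :: real
  assumes "x < a" "0 < a" "1 \<le> c"
  shows "x / c < a"
proof -
  have "a * 1 \<le> a * c" using assms by (intro mult_left_mono) auto
  then have "x < a * c" using assms by linarith
  moreover have "c > 0" using assms by simp
  ultimately show ?thesis by (simp add: pos_divide_less_eq)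
qed

lemma stepB:
  assumes h: "h \<in> C0_pos" and d: "\<delta> > 0"
  shows "\<exists>f\<in>C0_pos. (\<lambda>x. T_op f x - h x) \<in> L2_pos \<and> N2 (\<lambda>x. T_op f x - h x) < \<delta>"
proof -
  obtain a b M where a: "0 < a" and supp: "\<And>x. h x \<noteq> 0 \<Longrightarrow> a \<le> x \<and> x \<le> b"
    and bd: "\<And>x. cmod (h x) \<le> M" and cont: "continuous_on UNIV h"
    using C0_props[OF h] by blast
  have M0: "0 \<le> M" using bd[of 0] norm_ge_zero order_trans by blast
  define B where "B = max b 0"
  have B0: "B \<ge> 0" by (simp add: B_def)
  have hz: "h y = 0" if "y < a \<or> y > B" for y using supp[of y] that unfolding B_def by fastforce
  obtain N :: nat where N: "N2 h / \<delta> < 2^Suc N"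
  proof -
    obtain n :: nat where "N2 h / \<delta> < 2^n" using real_arch_pow[of 2 "N2 h / \<delta>"] by auto
    moreover have "(2::real)^n \<le> 2^Suc n" by (intro power_increasing) auto
    ultimately show ?thesis using that[of n] by linarith
  qed
  define u where "u x = (\<Sum>k\<le>N. (-1)^k * h (x / 2^Suc k) / 2^Suc k)" for x
  define f where "f x = u x + u (2 * x)" for x
  define bB where "bB = B * 2^Suc N"
  have ucont: "continuous_on UNIV u"
    unfolding u_def by (intro continuous_intros continuous_on_compose2[OF cont]) auto
  have fcont: "continuous_on UNIV f"
    unfolding f_def by (intro continuous_intros continuous_on_compose2[OF ucont]) auto
  have uz1: "u x = 0" if "x < a" for x
  proof -
    have "h (x / 2^Suc k) = 0" for k
    proof (rule hz)
      have "(1::real) \<le> 2^Suc k" by (rule one_le_power) simp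
      then show "x / 2^Suc k < a \<or> x / 2^Suc k > B" using div_lt_aux[OF that a] by blast
    qed
    then show ?thesis by (simp add: u_def)
  qed
  have uz2: "u x = 0" if xb: "x > bB" for x
  proof -
    have "h (x / 2^Suc k) = 0" if k: "k \<le> N" for k
    proof (rule hz)
      have "(2::real)^Suc k \<le> 2^Suc N" using k by (intro power_increasing) auto
      then have "B * 2^Suc k \<le> bB" unfolding bB_def using B0 by (intro mult_left_mono) auto
      then have "B * 2^Suc k < x" using xb by linarith
      then show "x / 2^Suc k < a \<or> x / 2^Suc k > B" by (simp add: pos_less_divide_eq)
    qed
    then show ?thesis by (simp add: u_def)
  qed
  have bB0: "bB \<ge> 0" unfolding bB_def using B0 by simp
  have fC0: "f \<in> C0_pos"
    unfolding C0_pos_def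
  proof (intro CollectI conjI exI[of _ "{a..bB}"])
    show "continuous_on {0<..} f" using fcont continuous_on_subset by blast
    show "compact {a..bB}" by simp
    show "{a..bB} \<subseteq> {0<..}" using a by auto
    show "\<forall>x. x \<notin> {a..bB} \<longrightarrow> f x = 0"
    proof (intro allI impI)
      fix x assume "x \<notin> {a..bB}"
      then have "x < a \<or> x > bB" by auto
      then show "f x = 0"
      proof
        assume "x < a"
        moreover have "2 * x < 2 * a" using \<open>x < a\<close> by simp
        moreover have "u (2 * x) = 0"
        proof -
          have "h (2 * x / 2^Suc k) = 0" for k
          proof (rule hz)
            have "(1::real) \<le> 2^k" by simp
            then have "x / 2^k < a" using div_lt_aux[OF \<open>x < a\<close> a] by simp
            then show "2 * x / 2^Suc k < a \<or> 2 * x / 2^Suc k > B" by simp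
          qed
          then show ?thesis by (simp add: u_def)
        qed
        ultimately show "f x = 0" using uz1 by (simp add: f_def)
      next
        assume "x > bB"
        moreover then have "2 * x > bB" using bB0 by simp
        ultimately show "f x = 0" using uz2 by (simp add: f_def)
      qed
    qed
  qed
  have uz0: "\<And>y. y \<le> 0 \<Longrightarrow> u y = 0" using uz1 a by force
  have Tf: "T_op f x = u x + 2 * u (2 * x)" for x
    by (rule T_op_G[where G=u and b=bB]) (auto simp: f_def uz0 uz2)
  define R where "R x = (-1)^N * h (x / 2^Suc N) / 2^Suc N" for x
  have TR: "T_op f x - h x = R x" for x
  proof -
    define w where "w k = h (x / 2^k) / 2^k" for k
    have e1: "u x = (\<Sum>k\<le>N. (-1)^k * w (Suc k))"
      unfolding u_def w_def by (simp add: mult.assoc)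
    have e2: "2 * u (2 * x) = (\<Sum>k\<le>N. (-1)^k * w k)"
      unfolding u_def w_def sum_distrib_left by (rule sum.cong) (auto simp: field_simps)
    have "T_op f x = w 0 + (-1)^N * w (Suc N)"
      unfolding Tf e1 e2 telesc2 ..
    then show ?thesis by (simp add: R_def w_def mult.assoc)
  qed
  define s :: real where "s = 1 / 2^Suc N"
  have s0: "s > 0" by (simp add: s_def)
  define c :: complex where "c = (-1)^N / 2^Suc N"
  have Rc: "R = (\<lambda>x. c * h (s * x))"
    by (auto simp: R_def c_def s_def)
  have hs: "(\<lambda>x. h (s * x)) \<in> L2_pos"
  proof (rule bsupp_L2[where M=M and b=bB])
    show "(\<lambda>x. h (s * x)) \<in> borel_measurable lborel"
      using borel_measurable_continuous_onI[OF continuous_on_compose2[OF cont, of UNIV "\<lambda>x. s * x"]]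
      by (auto intro: continuous_intros)
    show "cmod (h (s * x)) \<le> M" for x by (rule bd)
    show "h (s * x) = 0" if "bB < x" for x
    proof (rule hz)
      have "s * x = x / 2^Suc N" by (simp add: s_def)
      moreover have "B < x / 2^Suc N" using that by (simp add: bB_def pos_less_divide_eq)
      ultimately show "s * x < a \<or> s * x > B" by simp
    qed
  qed
  have RL: "R \<in> L2_pos" unfolding Rc by (rule L2_scale(1)[OF hs])
  have "N2 R = (cmod c)\<^sup>2 * (N2 h / s)"
    unfolding Rc L2_scale(2)[OF hs] N2_scale[OF s0] ..
  also have "\<dots> = N2 h / 2^Suc N"
    by (simp add: c_def s_def norm_divide norm_power power2_eq_square field_simps)
  also have "\<dots> < \<delta>" using N d by (simp add: divide_less_eq mult.commute)
  finally have "N2 R < \<delta>" .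
  moreover have "(\<lambda>x. T_op f x - h x) = R" using TR by auto
  ultimately show ?thesis using fC0 RL by auto
qed

lemma C0_add:
  assumes "h1 \<in> C0_pos" "h2 \<in> C0_pos"
  shows "(\<lambda>x. h1 x + h2 x) \<in> C0_pos"
proof -
  obtain K1 where "continuous_on {0<..} h1" "compact K1" "K1 \<subseteq> {0<..}" "\<And>x. x \<notin> K1 \<Longrightarrow> h1 x = 0"
    using assms(1) by (auto simp: C0_pos_def)
  moreover obtain K2 where "continuous_on {0<..} h2" "compact K2" "K2 \<subseteq> {0<..}" "\<And>x. x \<notin> K2 \<Longrightarrow> h2 x = 0"
    using assms(2) by (auto simp: C0_pos_def)
  ultimately show ?thesis unfolding C0_pos_def
    by (intro CollectI conjI exI[of _ "K1 \<union> K2"] continuous_on_add) auto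
qed

lemma C0_scale:
  assumes "h \<in> C0_pos"
  shows "(\<lambda>x. c * h x) \<in> C0_pos"
proof -
  obtain K where "continuous_on {0<..} h" "compact K" "K \<subseteq> {0<..}" "\<And>x. x \<notin> K \<Longrightarrow> h x = 0"
    using assms by (auto simp: C0_pos_def)
  then show ?thesis unfolding C0_pos_def
    by (intro CollectI conjI exI[of _ K] continuous_on_mult continuous_on_const) auto
qed

lemma C0_zero: "(\<lambda>x. 0) \<in> C0_pos"
  unfolding C0_pos_def by (intro CollectI conjI exI[of _ "{}"]) auto

definition Dn :: "(real \<Rightarrow> complex) set" where
  "Dn = {g \<in> L2_pos. \<forall>\<delta>>0. \<exists>h\<in>C0_pos. N2 (\<lambda>x. g x - h x) < \<delta>}"

lemma Dn_add:
  assumes g1: "g1 \<in> Dn" and g2: "g2 \<in> Dn"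
  shows "(\<lambda>x. g1 x + g2 x) \<in> Dn"
proof -
  have L1: "g1 \<in> L2_pos" and L2: "g2 \<in> L2_pos" using g1 g2 by (auto simp: Dn_def)
  have "\<exists>h\<in>C0_pos. N2 (\<lambda>x. (g1 x + g2 x) - h x) < \<delta>" if d: "\<delta> > 0" for \<delta>
  proof -
    have d4: "\<delta> / 4 > 0" using d by simp
    obtain h1 where h1: "h1 \<in> C0_pos" "N2 (\<lambda>x. g1 x - h1 x) < \<delta> / 4" using g1 d4 unfolding Dn_def by blast
    have d4: "\<delta> / 4 > 0" using d by simp
    obtain h2 where h2: "h2 \<in> C0_pos" "N2 (\<lambda>x. g2 x - h2 x) < \<delta> / 4" using g2 d4 unfolding Dn_def by blast
    have d1: "(\<lambda>x. g1 x - h1 x) \<in> L2_pos" by (rule L2_diff(1)[OF L1 C0_L2[OF h1(1)]])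
    have d2: "(\<lambda>x. g2 x - h2 x) \<in> L2_pos" by (rule L2_diff(1)[OF L2 C0_L2[OF h2(1)]])
    have "N2 (\<lambda>x. (g1 x + g2 x) - (h1 x + h2 x)) = N2 (\<lambda>x. (g1 x - h1 x) + (g2 x - h2 x))"
      by (simp add: algebra_simps)
    also have "\<dots> \<le> 2 * N2 (\<lambda>x. g1 x - h1 x) + 2 * N2 (\<lambda>x. g2 x - h2 x)"
      by (rule L2_add(2)[OF d1 d2])
    also have "\<dots> < \<delta>" using h1 h2 by linarith
    finally have *: "N2 (\<lambda>x. (g1 x + g2 x) - (h1 x + h2 x)) < \<delta>" .
    show ?thesis by (rule bexI[where x="\<lambda>x. h1 x + h2 x"]) (use * C0_add[OF h1(1) h2(1)] in auto)
  qed
  then show ?thesis using L2_add(1)[OF L1 L2] by (auto simp: Dn_def)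
qed

lemma Dn_scale:
  assumes g: "g \<in> Dn"
  shows "(\<lambda>x. c * g x) \<in> Dn"
proof -
  have L: "g \<in> L2_pos" using g by (auto simp: Dn_def)
  have "\<exists>h\<in>C0_pos. N2 (\<lambda>x. c * g x - h x) < \<delta>" if d: "\<delta> > 0" for \<delta>
  proof -
    have p: "0 < (cmod c)\<^sup>2 + 1" by (smt (verit) zero_le_power2)
    have dd: "\<delta> / ((cmod c)\<^sup>2 + 1) > 0" using d p by simp
    obtain h where h: "h \<in> C0_pos" "N2 (\<lambda>x. g x - h x) < \<delta> / ((cmod c)\<^sup>2 + 1)"
      using g dd unfolding Dn_def by blast
    have d1: "(\<lambda>x. g x - h x) \<in> L2_pos" by (rule L2_diff(1)[OF L C0_L2[OF h(1)]])
    have "N2 (\<lambda>x. c * g x - c * h x) = N2 (\<lambda>x. c * (g x - h x))" by (simp add: algebra_simps)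
    also have "\<dots> = (cmod c)\<^sup>2 * N2 (\<lambda>x. g x - h x)" by (rule L2_scale(2)[OF d1])
    also have "\<dots> \<le> ((cmod c)\<^sup>2 + 1) * N2 (\<lambda>x. g x - h x)"
      using N2_nonneg by (intro mult_right_mono) auto
    also have "\<dots> < \<delta>" using h(2) p by (simp add: pos_less_divide_eq mult.commute)
    finally have *: "N2 (\<lambda>x. c * g x - c * h x) < \<delta>" .
    show ?thesis by (rule bexI[where x="\<lambda>x. c * h x"]) (use * C0_scale[OF h(1), of c] in auto)
  qed
  then show ?thesis using L2_scale(1)[OF L] by (auto simp: Dn_def)
qed

lemma Dn_zero: "(\<lambda>x. 0) \<in> Dn"
proof -
  have "(\<lambda>x. 0) \<in> L2_pos" by (rule bsupp_L2[where M=0 and b=0]) auto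
  moreover have "N2 (\<lambda>x. 0) = 0" by (simp add: N2_def)
  ultimately show ?thesis using C0_zero unfolding Dn_def by (auto intro!: bexI[where x="\<lambda>x. 0"])
qed

lemma Dn_sum:
  assumes "finite I" "\<And>i. i \<in> I \<Longrightarrow> g i \<in> Dn"
  shows "(\<lambda>x. \<Sum>i\<in>I. g i x) \<in> Dn"
  using assms
proof (induction I rule: finite_induct)
  case empty then show ?case using Dn_zero by simp
next
  case (insert i I)
  then have "(\<lambda>x. g i x + (\<Sum>i\<in>I. g i x)) \<in> Dn" by (intro Dn_add) auto
  then show ?case using insert by simp
qed

lemma Dn_closed:
  assumes L: "g \<in> L2_pos" and ap: "\<And>\<delta>. \<delta> > 0 \<Longrightarrow> \<exists>g'\<in>Dn. N2 (\<lambda>x. g x - g' x) < \<delta>"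
  shows "g \<in> Dn"
proof -
  have "\<exists>h\<in>C0_pos. N2 (\<lambda>x. g x - h x) < \<delta>" if d: "\<delta> > 0" for \<delta>
  proof -
    have d4: "\<delta> / 4 > 0" using d by simp
    obtain g' where g': "g' \<in> Dn" "N2 (\<lambda>x. g x - g' x) < \<delta> / 4" using ap[OF d4] by blast
    have L': "g' \<in> L2_pos" using g' by (auto simp: Dn_def)
    obtain h where h: "h \<in> C0_pos" "N2 (\<lambda>x. g' x - h x) < \<delta> / 4" using g'(1) d4 unfolding Dn_def by blast
    have d1: "(\<lambda>x. g x - g' x) \<in> L2_pos" by (rule L2_diff(1)[OF L L'])
    have d2: "(\<lambda>x. g' x - h x) \<in> L2_pos" by (rule L2_diff(1)[OF L' C0_L2[OF h(1)]])
    have "N2 (\<lambda>x. g x - h x) = N2 (\<lambda>x. (g x - g' x) + (g' x - h x))" by simp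
    also have "\<dots> \<le> 2 * N2 (\<lambda>x. g x - g' x) + 2 * N2 (\<lambda>x. g' x - h x)"
      by (rule L2_add(2)[OF d1 d2])
    also have "\<dots> < \<delta>" using g' h by linarith
    finally show ?thesis using h(1) by blast
  qed
  then show ?thesis using L by (auto simp: Dn_def)
qed

lemma Dn_ind:
  assumes A: "A \<in> sets borel" and Ab: "A \<subseteq> {a..b}" and a: "0 < a" and ab: "a \<le> b"
  shows "(\<lambda>x. complex_of_real (indicator A x)) \<in> Dn"
proof -
  have L: "(\<lambda>x. complex_of_real (indicator A x)) \<in> L2_pos"
  proof (rule bsupp_L2[where M=1 and b=b])
    show "(\<lambda>x. complex_of_real (indicator A x)) \<in> borel_measurable lborel" using A by measurable
    show "cmod (complex_of_real (indicator A x)) \<le> 1" for x by (simp add: indicator_def)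
    show "x > b \<Longrightarrow> complex_of_real (indicator A x) = 0" for x using Ab by (auto simp: indicator_def)
  qed
  have "\<exists>h\<in>C0_pos. N2 (\<lambda>x. complex_of_real (indicator A x) - h x) < \<delta>" if d: "\<delta> > 0" for \<delta>
  proof -
    have Al: "A \<in> sets lebesgue" using A by simp
    have d2: "\<delta>/2 > 0" using d by simp
    obtain C where C: "closed C" "C \<subseteq> A" "A - C \<in> lmeasurable" "emeasure lebesgue (A - C) < ennreal (\<delta>/2)"
      using sets_lebesgue_inner_closed[OF Al d2] by blast
    obtain U where U: "open U" "A \<subseteq> U" "U - A \<in> lmeasurable" "emeasure lebesgue (U - A) < ennreal (\<delta>/2)"
      using sets_lebesgue_outer_open[OF Al d2] by blast
    define V where "V = U \<inter> {a/2<..<2*b}"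
    have Vo: "open V" using U(1) by (simp add: V_def open_Int)
    have AV: "A \<subseteq> V"
    proof
      fix x assume "x \<in> A"
      then have "x \<in> U" "a \<le> x" "x \<le> b" using U(2) Ab by auto
      then show "x \<in> V" using a by (auto simp: V_def)
    qed
    have cV: "closed (-V)" using Vo by (simp add: closed_def)
    have CV: "C \<inter> -V = {}" using C(2) AV by auto
    obtain \<phi> :: "real \<Rightarrow> real" where phi: "continuous_on UNIV \<phi>" "\<And>x. \<phi> x \<in> closed_segment 1 0"
       "\<And>x. x \<in> C \<Longrightarrow> \<phi> x = 1" "\<And>x. x \<in> -V \<Longrightarrow> \<phi> x = 0"
      using Urysohn[where S=C and T="-V" and a="1::real" and b=0, OF C(1) cV CV] by blast
    define h where "h x = complex_of_real (\<phi> x)" for x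
    have hcont: "continuous_on UNIV h" unfolding h_def by (intro continuous_intros phi(1))
    have hC0: "h \<in> C0_pos"
      unfolding C0_pos_def
    proof (intro CollectI conjI exI[of _ "{a/2..2*b}"])
      show "continuous_on {0<..} h" using hcont continuous_on_subset by blast
      show "compact {a/2..2*b}" by simp
      show "{a/2..2*b} \<subseteq> {0<..}" using a by auto
      show "\<forall>x. x \<notin> {a/2..2*b} \<longrightarrow> h x = 0" using phi(4) by (auto simp: V_def h_def)
    qed
    have VCb: "V - C \<in> sets borel" using Vo C(1) by auto
    have pw: "(cmod (complex_of_real (indicator A x) - h x))\<^sup>2 \<le> indicator (V - C) x" for x
    proof -
      have r: "0 \<le> \<phi> x" "\<phi> x \<le> 1" using phi(2)[of x] by (auto simp: closed_segment_eq_real_ivl)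
      have e: "cmod (complex_of_real (indicator A x) - h x) = \<bar>indicator A x - \<phi> x\<bar>"
        unfolding h_def by (metis norm_of_real of_real_diff)
      consider "x \<in> C" | "x \<notin> V" | "x \<in> V - C" by blast
      then show ?thesis
      proof cases
        case 1 then show ?thesis using e phi(3) C(2) by (auto simp: indicator_def)
      next
        case 2 then show ?thesis using e phi(4) AV by (auto simp: indicator_def)
      next
        case 3
        have "\<bar>indicator A x - \<phi> x\<bar> \<le> (1::real)" using r by (auto simp: indicator_def)
        then have "(\<bar>indicator A x - \<phi> x\<bar>)\<^sup>2 \<le> (1::real)" by (simp add: abs_square_le_1)
        then show ?thesis using e 3 by simp
      qed
    qed
    have dL: "(\<lambda>x. complex_of_real (indicator A x) - h x) \<in> L2_pos"
      by (rule L2_diff(1)[OF L C0_L2[OF hC0]])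
    have i1: "set_integrable lborel {0..} (\<lambda>x. (cmod (complex_of_real (indicator A x) - h x))\<^sup>2)"
      using dL by (simp add: L2_pos_def)
    have i2: "set_integrable lborel {0..} (\<lambda>x. indicator (V - C) x :: real)"
    proof (rule bsupp_int[where M=1 and b="2*b"])
      show "(indicator (V - C) :: real \<Rightarrow> real) \<in> borel_measurable lborel"
        using VCb by (intro borel_measurable_indicator) simp
      show "\<bar>indicator (V - C) x :: real\<bar> \<le> 1" for x by (simp add: indicator_def)
      show "x > 2 * b \<Longrightarrow> indicator (V - C) x = (0::real)" for x by (auto simp: V_def indicator_def)
    qed
    have "N2 (\<lambda>x. complex_of_real (indicator A x) - h x) \<le> (LINT x:{0..}|lborel. indicator (V - C) x)"
      unfolding N2_def by (rule set_integral_mono[OF i1 i2 pw])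
    also have "(LINT x:{0..}|lborel. indicator (V - C) x) = integral\<^sup>L lborel (indicator (V - C) :: real \<Rightarrow> real)"
    proof -
      have "(\<lambda>x. indicator {0..} x *\<^sub>R indicator (V - C) x) = (indicator (V - C) :: real \<Rightarrow> real)"
        using a by (auto simp: V_def indicator_def)
      then show ?thesis by (simp only: set_lebesgue_integral_def)
    qed
    also have "\<dots> = measure lborel (V - C)" by simp
    also have "\<dots> = measure lebesgue (V - C)" using VCb by simp
    also have "\<dots> \<le> measure lebesgue ((U - A) \<union> (A - C))"
    proof (rule measure_mono_fmeasurable)
      show "V - C \<subseteq> (U - A) \<union> (A - C)" using V_def by auto
      show "V - C \<in> sets lebesgue" using VCb by simp
      show "(U - A) \<union> (A - C) \<in> fmeasurable lebesgue" using U(3) C(3) by (rule fmeasurable.Un)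
    qed
    also have "\<dots> \<le> measure lebesgue (U - A) + measure lebesgue (A - C)"
      by (rule measure_Un_le) (use U(3) C(3) in auto)
    also have "\<dots> < \<delta>/2 + \<delta>/2"
    proof -
      have "ennreal (measure lebesgue (U - A)) < ennreal (\<delta>/2)" using U(4) emeasure_eq_measure2[OF U(3)] by simp
      then have 1: "measure lebesgue (U - A) < \<delta>/2" by (simp add: ennreal_less_iff)
      have "ennreal (measure lebesgue (A - C)) < ennreal (\<delta>/2)" using C(4) emeasure_eq_measure2[OF C(3)] by simp
      then have 2: "measure lebesgue (A - C) < \<delta>/2" by (simp add: ennreal_less_iff)
      show ?thesis using 1 2 by simp
    qed
    finally have *: "N2 (\<lambda>x. complex_of_real (indicator A x) - h x) < \<delta>" by simp
    show ?thesis using hC0 * by blast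
  qed
  then show ?thesis using L by (auto simp: Dn_def)
qed

lemma count_ind:
  fixes m N :: nat
  shows "(\<Sum>i\<in>{1..N}. (if i \<le> m then 1 else 0 :: real)) = real (min m N)"
  by (induction N) (auto simp: atLeastAtMostSuc_conv min_def)

lemma Dn_nonneg:
  fixes p :: "real \<Rightarrow> real"
  assumes pm: "p \<in> borel_measurable lborel" and p0: "\<And>x. 0 \<le> p x" and pM: "\<And>x. p x \<le> M"
    and supp: "\<And>x. p x \<noteq> 0 \<Longrightarrow> a \<le> x \<and> x \<le> b" and a: "0 < a" and ab: "a \<le> b"
  shows "(\<lambda>x. complex_of_real (p x)) \<in> Dn"
proof (cases "M > 0")
  case False
  then have "p x = 0" for x using p0[of x] pM[of x] by simp
  then have "(\<lambda>x. complex_of_real (p x)) = (\<lambda>x. 0)" by auto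
  then show ?thesis using Dn_zero by simp
next
  case M: True
  have pb: "p \<in> borel_measurable borel" using pm by simp
  have pz: "p x = 0" if "x < a \<or> x > b" for x using supp[of x] that by fastforce
  have L: "(\<lambda>x. complex_of_real (p x)) \<in> L2_pos"
  proof (rule bsupp_L2[where M=M and b=b])
    show "(\<lambda>x. complex_of_real (p x)) \<in> borel_measurable lborel" using pm by measurable
    show "cmod (complex_of_real (p x)) \<le> M" for x using p0[of x] pM[of x] by simp
    show "x > b \<Longrightarrow> complex_of_real (p x) = 0" for x using pz by simp
  qed
  show ?thesis
  proof (rule Dn_closed[OF L])
    fix \<delta> :: real assume d: "\<delta> > 0"
    define K where "K = M\<^sup>2 * (b - a + 1)"
    have K0: "K > 0" unfolding K_def using M ab by simp
    obtain n :: nat where n: "K / \<delta> < n" using reals_Archimedean2 by blast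
    define N where "N = Suc n"
    have N1: "(1::real) \<le> N" by (simp add: N_def)
    have NK: "K / \<delta> < N" using n by (simp add: N_def)
    have N0: "(0::real) < N" using N1 by simp
    define A where "A i = {y. real i * M / N \<le> p y}" for i :: nat
    define s where "s x = (\<Sum>i\<in>{1..N}. complex_of_real (M / N) * complex_of_real (indicator (A i) x))" for x
    have sD: "s \<in> Dn"
    proof -
      have "(\<lambda>x. \<Sum>i\<in>{1..N}. complex_of_real (M / N) * complex_of_real (indicator (A i) x)) \<in> Dn"
      proof (rule Dn_sum)
        fix i assume i: "i \<in> {1..N}"
        have Ab: "A i \<in> sets borel"
        proof -
          have e: "A i = p -` {real i * M / N..} \<inter> space borel" by (auto simp: A_def)
          have "p -` {real i * M / N..} \<inter> space borel \<in> sets borel" by (rule measurable_sets[OF pb]) simp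
          then show ?thesis by (simp only: e)
        qed
        have As: "A i \<subseteq> {a..b}"
        proof
          fix y assume "y \<in> A i"
          then have "real i * M / N \<le> p y" by (simp add: A_def)
          moreover have "0 < real i * M / N" using i M N0 by simp
          ultimately have "p y \<noteq> 0" by simp
          then show "y \<in> {a..b}" using supp by auto
        qed
        show "(\<lambda>x. complex_of_real (M / N) * complex_of_real (indicator (A i) x)) \<in> Dn"
          by (rule Dn_scale[OF Dn_ind[OF Ab As a ab]])
      qed simp
      then show ?thesis by (simp add: s_def[abs_def])
    qed
    have sL: "s \<in> L2_pos" using sD by (simp add: Dn_def)
    have pw: "(cmod (complex_of_real (p x) - s x))\<^sup>2 \<le> (M / N)\<^sup>2 * indicator {a..b} x" for x
    proof -
      define r where "r = p x * N / M"
      have r0: "0 \<le> r" using p0[of x] M N0 by (simp add: r_def)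
      have rN: "r \<le> N" using pM[of x] M N0 by (simp add: r_def field_simps)
      define m where "m = nat \<lfloor>r\<rfloor>"
      have fl0: "0 \<le> \<lfloor>r\<rfloor>" using r0 by simp
      have mr: "real m \<le> r" "r < real m + 1" using fl0 unfolding m_def
        by (simp_all add: of_nat_nat)
      have mN: "m \<le> N" using mr(1) rN by linarith
      have ind: "indicator (A i) x = (if i \<le> m then 1 else (0::real))" for i
      proof -
        have "real i * M / N \<le> p x \<longleftrightarrow> real i \<le> r" using M N0 by (simp add: r_def field_simps)
        also have "\<dots> \<longleftrightarrow> int i \<le> \<lfloor>r\<rfloor>" by (simp add: le_floor_iff)
        also have "\<dots> \<longleftrightarrow> i \<le> m" using fl0 by (simp add: m_def le_nat_iff)
        finally show ?thesis by (simp add: A_def indicator_def)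
      qed
      have "s x = complex_of_real (M / N * (\<Sum>i\<in>{1..N}. indicator (A i) x))"
        by (simp add: s_def sum_distrib_left)
      also have "\<dots> = complex_of_real (M / N * real m)"
        using count_ind[of m N] mN by (simp add: ind min_def)
      finally have sx: "s x = complex_of_real (M / N * real m)" .
      have px: "p x = M / N * r" using M N0 by (simp add: r_def)
      have dif: "cmod (complex_of_real (p x) - s x) = \<bar>M / N * (r - real m)\<bar>"
        unfolding sx px by (metis norm_of_real of_real_diff right_diff_distrib)
      show ?thesis
      proof (cases "x \<in> {a..b}")
        case True
        have "0 \<le> M / N * (r - real m)" using mr M N0 by simp
        moreover have "M / N * (r - real m) \<le> M / N * 1" using mr M N0 by (intro mult_left_mono) auto
        ultimately have "\<bar>M / N * (r - real m)\<bar> \<le> M / N" by simp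
        then have "(\<bar>M / N * (r - real m)\<bar>)\<^sup>2 \<le> (M / N)\<^sup>2" by (intro power_mono) auto
        then show ?thesis using True dif by simp
      next
        case False
        then have "p x = 0" using pz by auto
        then have "r = 0" by (simp add: r_def)
        then have "m = 0" by (simp add: m_def)
        then show ?thesis using dif \<open>r = 0\<close> False by simp
      qed
    qed
    have dL: "(\<lambda>x. complex_of_real (p x) - s x) \<in> L2_pos" by (rule L2_diff(1)[OF L sL])
    have i1: "set_integrable lborel {0..} (\<lambda>x. (cmod (complex_of_real (p x) - s x))\<^sup>2)"
      using dL by (simp add: L2_pos_def)
    have i2: "set_integrable lborel {0..} (\<lambda>x. (M / N)\<^sup>2 * indicator {a..b} x :: real)"
      by (rule bsupp_int[where M="(M/N)\<^sup>2" and b=b]) (auto simp: indicator_def)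
    have "N2 (\<lambda>x. complex_of_real (p x) - s x) \<le> (LINT x:{0..}|lborel. (M / N)\<^sup>2 * indicator {a..b} x)"
      unfolding N2_def by (rule set_integral_mono[OF i1 i2 pw])
    also have "(LINT x:{0..}|lborel. (M / N)\<^sup>2 * indicator {a..b} x) = (M / N)\<^sup>2 * (b - a)"
    proof -
      have "(\<lambda>x. indicator {0..} x *\<^sub>R ((M / N)\<^sup>2 * indicator {a..b} x)) = (\<lambda>x. (M / N)\<^sup>2 * (indicator {a..b} x :: real))"
        using a by (auto simp: indicator_def)
      then have "(LINT x:{0..}|lborel. (M / N)\<^sup>2 * indicator {a..b} x) = (\<integral>x. (M / N)\<^sup>2 * (indicator {a..b} x :: real) \<partial>lborel)"
        by (simp only: set_lebesgue_integral_def)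
      also have "\<dots> = (M / N)\<^sup>2 * (b - a)" using ab by simp
      finally show ?thesis .
    qed
    also have "\<dots> = M\<^sup>2 * (b - a) / (real N * real N)" by (simp add: power2_eq_square)
    also have "\<dots> \<le> K / real N"
    proof -
      have "M\<^sup>2 * (b - a) \<le> K" unfolding K_def using ab by (simp add: mult_left_mono)
      also have "K \<le> K * real N" using K0 N1 by simp
      finally have "M\<^sup>2 * (b - a) \<le> K * real N" .
      then have "M\<^sup>2 * (b - a) / (real N * real N) \<le> K * real N / (real N * real N)"
        using N0 by (intro divide_right_mono) auto
      also have "K * real N / (real N * real N) = K / real N" using N0 by simp
      finally show ?thesis .
    qed
    also have "\<dots> < \<delta>" using NK d N0 by (simp add: field_simps)
    finally have *: "N2 (\<lambda>x. complex_of_real (p x) - s x) < \<delta>" .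
    show "\<exists>g'\<in>Dn. N2 (\<lambda>x. complex_of_real (p x) - g' x) < \<delta>" using sD * by blast
  qed
qed

lemma Dn_bdd:
  fixes g :: "real \<Rightarrow> complex"
  assumes gm: "g \<in> borel_measurable lborel" and gM: "\<And>x. cmod (g x) \<le> M"
    and supp: "\<And>x. g x \<noteq> 0 \<Longrightarrow> a \<le> x \<and> x \<le> b" and a: "0 < a" and ab: "a \<le> b"
  shows "g \<in> Dn"
proof -
  have [measurable]: "g \<in> borel_measurable borel" using gm by simp
  have gen: "(\<lambda>x. complex_of_real (q x)) \<in> Dn"
    if qm: "q \<in> borel_measurable lborel" and qq: "\<And>x. 0 \<le> q x \<and> q x \<le> cmod (g x) \<and> (g x = 0 \<longrightarrow> q x = 0)" for q
  proof (rule Dn_nonneg[OF qm _ _ _ a ab, where M=M])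
    show "0 \<le> q x" for x using qq[of x] by simp
    show "q x \<le> M" for x using qq[of x] gM[of x] by linarith
    show "a \<le> x \<and> x \<le> b" if "q x \<noteq> 0" for x using qq[of x] supp[of x] that by auto
  qed
  have bRe: "Re z \<le> cmod z" "- Re z \<le> cmod z" "Im z \<le> cmod z" "- Im z \<le> cmod z" for z
    using abs_Re_le_cmod[of z] abs_Im_le_cmod[of z] by linarith+
  have D1: "(\<lambda>x. complex_of_real (max (Re (g x)) 0)) \<in> Dn"
    by (rule gen) (use bRe in \<open>auto simp: max_def\<close>)
  have D2: "(\<lambda>x. complex_of_real (max (- Re (g x)) 0)) \<in> Dn"
    by (rule gen) (use bRe in \<open>auto simp: max_def\<close>)
  have D3: "(\<lambda>x. complex_of_real (max (Im (g x)) 0)) \<in> Dn"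
    by (rule gen) (use bRe in \<open>auto simp: max_def\<close>)
  have D4: "(\<lambda>x. complex_of_real (max (- Im (g x)) 0)) \<in> Dn"
    by (rule gen) (use bRe in \<open>auto simp: max_def\<close>)
  have S: "(\<lambda>x. ((complex_of_real (max (Re (g x)) 0) + (-1) * complex_of_real (max (- Re (g x)) 0))
      + \<i> * complex_of_real (max (Im (g x)) 0)) + (- \<i>) * complex_of_real (max (- Im (g x)) 0)) \<in> Dn"
    by (intro Dn_add Dn_scale D1 D2 D3 D4)
  have "(\<lambda>x. ((complex_of_real (max (Re (g x)) 0) + (-1) * complex_of_real (max (- Re (g x)) 0))
      + \<i> * complex_of_real (max (Im (g x)) 0)) + (- \<i>) * complex_of_real (max (- Im (g x)) 0)) = g"
  proof
    fix x show "((complex_of_real (max (Re (g x)) 0) + (-1) * complex_of_real (max (- Re (g x)) 0))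
      + \<i> * complex_of_real (max (Im (g x)) 0)) + (- \<i>) * complex_of_real (max (- Im (g x)) 0) = g x"
      by (rule complex_eqI) (auto simp: max_def)
  qed
  then show ?thesis using S by simp
qed

lemma Dn_all:
  assumes gL: "g \<in> L2_pos"
  shows "g \<in> Dn"
proof (rule Dn_closed[OF gL])
  have gm: "g \<in> borel_measurable lborel" and gi: "set_integrable lborel {0..} (\<lambda>x. (cmod (g x))\<^sup>2)"
    using gL by (auto simp: L2_pos_def)
  have gb[measurable]: "g \<in> borel_measurable borel" using gm by simp
  define gn where "gn n x = (if 1 / real (Suc n) \<le> x \<and> x \<le> real (Suc n) \<and> cmod (g x) \<le> real (Suc n) then g x else 0)" for n x
  have gnm[measurable]: "gn n \<in> borel_measurable borel" for n unfolding gn_def[abs_def] by measurable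
  have gnD: "gn n \<in> Dn" for n
  proof (rule Dn_bdd[where M="real (Suc n)" and a="1 / real (Suc n)" and b="real (Suc n)"])
    show "gn n \<in> borel_measurable lborel" by simp
    show "cmod (gn n x) \<le> real (Suc n)" for x by (simp add: gn_def)
    show "gn n x \<noteq> 0 \<Longrightarrow> 1 / real (Suc n) \<le> x \<and> x \<le> real (Suc n)" for x by (auto simp: gn_def split: if_splits)
    show "0 < 1 / real (Suc n)" by simp
    show "1 / real (Suc n) \<le> real (Suc n)" by (simp add: field_simps)
  qed
  have lim: "(\<lambda>n. N2 (\<lambda>x. g x - gn n x)) \<longlonglongrightarrow> 0"
  proof -
    define S where "S n x = indicator {0..} x * (cmod (g x - gn n x))\<^sup>2" for n x
    have wi: "integrable lborel (\<lambda>x. indicator {0..} x * (cmod (g x))\<^sup>2)"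
      using gi by (simp add: set_integrable_def)
    have "(\<lambda>n. integral\<^sup>L lborel (S n)) \<longlonglongrightarrow> integral\<^sup>L lborel (\<lambda>x::real. 0::real)"
    proof (rule Bochner_Integration.integral_dominated_convergence[OF _ _ wi])
      show "(\<lambda>x. 0::real) \<in> borel_measurable lborel" by simp
      show "S n \<in> borel_measurable lborel" for n
        unfolding S_def[abs_def] by measurable
      show "AE x in lborel. norm (S n x) \<le> indicator {0..} x * (cmod (g x))\<^sup>2" for n
      proof (rule AE_I2)
        fix x
        have "(cmod (g x - gn n x))\<^sup>2 \<le> (cmod (g x))\<^sup>2" by (simp add: gn_def)
        moreover have "(0::real) \<le> indicator {0..} x" by simp
        ultimately have "indicator {0..} x * (cmod (g x - gn n x))\<^sup>2 \<le> indicator {0..} x * (cmod (g x))\<^sup>2"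
          by (rule mult_left_mono)
        then show "norm (S n x) \<le> indicator {0..} x * (cmod (g x))\<^sup>2" by (simp add: S_def)
      qed
      show "AE x in lborel. (\<lambda>n. S n x) \<longlonglongrightarrow> 0"
        unfolding S_def
        using AE_lborel_singleton[of "0::real"]
      proof eventually_elim
        fix x :: real assume x: "x \<noteq> 0"
        show "(\<lambda>n. indicator {0..} x * (cmod (g x - gn n x))\<^sup>2) \<longlonglongrightarrow> 0"
        proof (cases "x < 0")
          case True then show ?thesis by (simp add: indicator_def)
        next
          case False
          then have xp: "x > 0" using x by simp
          obtain n0 :: nat where n0: "max (max (1 / x) x) (cmod (g x)) < n0" using reals_Archimedean2 by blast
          have "eventually (\<lambda>n. indicator {0..} x * (cmod (g x - gn n x))\<^sup>2 = 0) sequentially"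
            unfolding eventually_sequentially
          proof (intro exI[of _ n0] allI impI)
            fix n assume n: "n0 \<le> n"
            then have nn: "real n0 \<le> real (Suc n)" by simp
            have "1 / x < real (Suc n)" using n0 nn by linarith
            then have "1 / real (Suc n) < x" using xp by (simp add: field_simps)
            moreover have "x \<le> real (Suc n)" "cmod (g x) \<le> real (Suc n)" using n0 nn by linarith+
            ultimately have "gn n x = g x" by (simp add: gn_def)
            then show "indicator {0..} x * (cmod (g x - gn n x))\<^sup>2 = 0" by simp
          qed
          then show ?thesis by (rule tendsto_eventually)
        qed
      qed
    qed
    moreover have "(\<lambda>n. N2 (\<lambda>x. g x - gn n x)) = (\<lambda>n. integral\<^sup>L lborel (S n))"
    proof
      fix n
      have "(\<lambda>x. indicator {0..} x *\<^sub>R (cmod (g x - gn n x))\<^sup>2) = S n" by (auto simp: S_def)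
      then show "N2 (\<lambda>x. g x - gn n x) = integral\<^sup>L lborel (S n)" by (simp only: N2_def set_lebesgue_integral_def)
    qed
    ultimately show ?thesis by simp
  qed
  fix \<delta> :: real assume d: "\<delta> > 0"
  have "eventually (\<lambda>n. N2 (\<lambda>x. g x - gn n x) < \<delta>) sequentially"
    by (rule order_tendstoD(2)[OF lim d])
  then obtain n0 where n0: "\<And>n. n \<ge> n0 \<Longrightarrow> N2 (\<lambda>x. g x - gn n x) < \<delta>"
    unfolding eventually_sequentially by blast
  have "N2 (\<lambda>x. g x - gn n0 x) < \<delta>" by (rule n0) simp
  then show "\<exists>g'\<in>Dn. N2 (\<lambda>x. g x - g' x) < \<delta>" using gnD by blast
qed

theorem mainTheorem8:
  shows "(\<forall>f\<in>C0_pos. L2norm (T_op f) = sqrt 2 * L2norm f)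
       \<and> (\<forall>g\<in>L2_pos. \<forall>e>0. \<exists>f\<in>C0_pos. L2norm (\<lambda>x. T_op f x - g x) < e)"
proof (intro conjI ballI allI impI)
  fix f assume "f \<in> C0_pos" then show "L2norm (T_op f) = sqrt 2 * L2norm f" by (rule part1)
next
  fix g and e :: real assume g: "g \<in> L2_pos" and e: "e > 0"
  have gD: "g \<in> Dn" by (rule Dn_all[OF g])
  define \<delta> where "\<delta> = e\<^sup>2 / 8"
  have d: "\<delta> > 0" using e by (simp add: \<delta>_def)
  obtain h where h: "h \<in> C0_pos" "N2 (\<lambda>x. g x - h x) < \<delta>" using gD d unfolding Dn_def by blast
  obtain f where f: "f \<in> C0_pos" "(\<lambda>x. T_op f x - h x) \<in> L2_pos" "N2 (\<lambda>x. T_op f x - h x) < \<delta>"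
    using stepB[OF h(1) d] by blast
  have hg: "(\<lambda>x. h x - g x) \<in> L2_pos" by (rule L2_diff(1)[OF C0_L2[OF h(1)] g])
  have sym: "N2 (\<lambda>x. h x - g x) = N2 (\<lambda>x. g x - h x)" by (simp add: N2_def norm_minus_commute)
  have "N2 (\<lambda>x. T_op f x - g x) = N2 (\<lambda>x. (T_op f x - h x) + (h x - g x))" by simp
  also have "\<dots> \<le> 2 * N2 (\<lambda>x. T_op f x - h x) + 2 * N2 (\<lambda>x. h x - g x)"
    by (rule L2_add(2)[OF f(2) hg])
  also have "\<dots> < e\<^sup>2" using f(3) h(2) sym d unfolding \<delta>_def by linarith
  finally have "sqrt (N2 (\<lambda>x. T_op f x - g x)) < sqrt (e\<^sup>2)" by (rule real_sqrt_less_mono)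
  then have "L2norm (\<lambda>x. T_op f x - g x) < e" using e by (simp add: L2norm_N2)
  then show "\<exists>f\<in>C0_pos. L2norm (\<lambda>x. T_op f x - g x) < e" using f(1) by blast
qed

end
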